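(* Let $p$ be an odd prime and $k\ge1$. For $0\le l<p^k$, $$\mathcal M_{V_{2,l}}=\begin{cases}\frac{p-1}{2}(2p+1), & l<\frac{p^k-1}{2},\\[2pt] \frac{p-1}{2}(2p-1), & l\ge\frac{p^k-1}{2}.\end{cases}$$
   Context: Fix an odd prime $p$ and an integer $k\ge 0$. For integers $0\le i<n$ write $\lambda(n,i)=(n-i,1^i)$ for the hook partition of $n$ with $n-i$ boxes in its first row and $i$ further boxes in its first column. If $\mu=\lambda(n',i')$ is obtained from $\lambda(n,i)$ by appending $m=(n'-i')-(n-i)\ge 0$ boxes to the first row and $n''=i'-i\ge 0$ boxes to the first column, we say $\mu$ is obtained by adding the block $B_{m,n''}$ ($m$ horizontal nodes, $n''$ vertical nodes). Put $x_s=p^k(sp-(s+1))$. The relevant part ("column $k$") of the $p$-Bratteli diagram is the graded directed graph with vertices: on floor $2k+1$, $S_i=\lambda(p^k(p-1),i)$ for $0\le i<p^k(p-1)$; on floor $2(k+s)$ ($s\ge1$), $V_{s,l}=\lambda\big(p^k(2sp-(2s+1)),\,x_s+l\big)$ for $0\le l<p^k$; on floor $2(k+s)-1$ ($s\ge2$), $W_{s,l'}=\lambda\big(p^k((2s-1)p-2s),\,x_{s-1}+l'\big)$ for $0\le l'<p^{k+1}$; and edges, each labelled by the block added: (E1) $S_i\to V_{1,l}$ exactly when $i=p^kt+l$ with $0\le t\le p-2$, block $B_{p^kt,\,p^k(p-2-t)}$; (E2) for $s\ge2$, $0\le l<p^k$, $0\le\beta\le p-1$: $V_{s-1,l}\to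 W_{s,pl+\beta}$, block $B_{p^k(p-1)-((p-1)l+\beta),\,(p-1)l+\beta}$; (E3) for $s\ge 2$, $0\le l'<p^{k+1}$ and $t=\lfloor l'/p^k\rfloor$: $W_{s,l'}\to V_{s,l'-p^kt}$, block $B_{p^kt,\,p^k(p-1-t)}$. A path ending at a vertex $v$ is a sequence of edges starting at some $S_i$ and going up one floor at a time to $v$ ($S_i\to V_{1,\cdot}\to W_{2,\cdot}\to V_{2,\cdot}\to W_{3,\cdot}\to\cdots\to v$); $\mathcal P(v)$ is the set of all paths ending at $v$. The blocks of a path are numbered $B^2,B^3,\dots,B^N$: $B^2$ is the block of the edge leaving $S_i$, and for $j\ge2$, $B^{2j-1}$ is the block of the edge into $W_{j,\cdot}$ and $B^{2j}$ the block of the edge into $V_{j,\cdot}$. Write $B^j=B_{m_j,n_j}$. Descents: $1\in\mathrm{Des}(P)$ iff $m_2=p^kt$ with $0\le t<\frac{p-1}{2}$; $2\notin\mathrm{Des}(P)$; for $3\le j<N$, $j\in\mathrm{Des}(P)$ iff $m_j>m_{j+1}$ and $n_j<n_{j+1}$. $\mathrm{des}(P)=|\mathrm{Des}(P)|$. The $p^k$-Fibonacci number of a vertex $v$ is $\mathcal M_v=\sum_{P\in\mathcal P(v)}\mathrm{des}(P)$. *)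

theory Defs
  imports "HOL-Computational_Algebra.Primes"
begin

text \<open>Vertices of column k of the p-Bratteli diagram:
  S i = S_i (floor 2k+1), V s l = V_{s,l} (floor 2(k+s)), W s l' = W_{s,l'} (floor 2(k+s)-1).\<close>
datatype vtx = S nat | V nat nat | W nat nat

fun valid_vtx :: "nat \<Rightarrow> nat \<Rightarrow> vtx \<Rightarrow> bool" where
  "valid_vtx p k (S i) = (i < p^k * (p - 1))"
| "valid_vtx p k (V s l) = (1 \<le> s \<and> l < p^k)"
| "valid_vtx p k (W s l') = (2 \<le> s \<and> l' < p^(k+1))"

text \<open>Block labelling the edge u -> v (m horizontal, n vertical nodes), or None if no edge.\<close>
fun edge_block :: "nat \<Rightarrow> nat \<Rightarrow> vtx \<Rightarrow> vtx \<Rightarrow> (nat \<times> nat) option" where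
  "edge_block p k (S i) (V s l) =
     (if valid_vtx p k (S i) \<and> valid_vtx p k (V s l) \<and> s = 1
         \<and> (\<exists>t. t \<le> p - 2 \<and> i = p^k * t + l)
      then (let t = (i - l) div p^k in Some (p^k * t, p^k * (p - 2 - t)))
      else None)"
| "edge_block p k (V s l) (W s' l') =
     (if valid_vtx p k (V s l) \<and> valid_vtx p k (W s' l') \<and> s' = s + 1
         \<and> (\<exists>\<beta>. \<beta> \<le> p - 1 \<and> l' = p * l + \<beta>)
      then (let \<beta> = l' - p * l in
            Some (p^k * (p - 1) - ((p - 1) * l + \<beta>), (p - 1) * l + \<beta>))
      else None)"
| "edge_block p k (W s l') (V s' l) =
     (let t = l' div p^k in
      if valid_vtx p k (W s l') \<and> valid_vtx p k (V s' l) \<and> s' = s \<and> l = l' - p^k * t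
      then Some (p^k * t, p^k * (p - 1 - t))
      else None)"
| "edge_block p k _ _ = None"

fun is_S :: "vtx \<Rightarrow> bool" where
  "is_S (S _) = True" | "is_S _ = False"

definition paths :: "nat \<Rightarrow> nat \<Rightarrow> vtx \<Rightarrow> vtx list set" where
  "paths p k v = {vs. vs \<noteq> [] \<and> is_S (hd vs) \<and> valid_vtx p k (hd vs) \<and> last vs = v \<and>
      (\<forall>j. j + 1 < length vs \<longrightarrow> edge_block p k (vs ! j) (vs ! (j + 1)) \<noteq> None)}"

text \<open>Blocks of a path: blocks vs ! (j - 2) is B^j, for 2 \<le> j \<le> N = length vs.\<close>
definition blocks :: "nat \<Rightarrow> nat \<Rightarrow> vtx list \<Rightarrow> (nat \<times> nat) list" where
  "blocks p k vs = map (\<lambda>j. the (edge_block p k (vs ! j) (vs ! (j + 1)))) [0..<length vs - 1]"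

definition Des :: "nat \<Rightarrow> nat \<Rightarrow> vtx list \<Rightarrow> nat set" where
  "Des p k vs = (let B = blocks p k vs; N = length vs;
                     m = (\<lambda>j. fst (B ! (j - 2))); n = (\<lambda>j. snd (B ! (j - 2))) in
     {j. j = 1 \<and> 2 \<le> N \<and> (\<exists>t. m 2 = p^k * t \<and> 2 * t < p - 1)}
     \<union> {j. 3 \<le> j \<and> j < N \<and> m j > m (j + 1) \<and> n j < n (j + 1)})"

definition des :: "nat \<Rightarrow> nat \<Rightarrow> vtx list \<Rightarrow> nat" where
  "des p k vs = card (Des p k vs)"

definition Fib_M :: "nat \<Rightarrow> nat \<Rightarrow> vtx \<Rightarrow> nat" where
  "Fib_M p k v = (\<Sum>P\<in>paths p k v. des p k P)"

end

theory Submission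
  imports Defs
begin
fun lev :: "vtx \<Rightarrow> nat" where
  "lev (S _) = 1" | "lev (V s _) = 2*s" | "lev (W s _) = 2*s - 1"

lemma edge_lev: "edge_block p k u v \<noteq> None \<Longrightarrow> lev v = Suc (lev u)"
  by (cases u; cases v) (auto simp: Let_def split: if_splits)

lemma path_lev:
  assumes "vs \<in> paths p k v" shows "j < length vs \<Longrightarrow> lev (vs!j) = Suc j"
proof (induction j)
  case 0
  from assms have "vs \<noteq> []" "is_S (hd vs)" by (auto simp: paths_def)
  then show ?case by (cases "hd vs") (auto simp: hd_conv_nth)
next
  case (Suc j)
  from assms Suc.prems have "edge_block p k (vs!j) (vs!(j+1)) \<noteq> None" by (auto simp: paths_def)
  then show ?case using Suc edge_lev by fastforce
qed

lemma path_len: assumes "vs \<in> paths p k v" shows "length vs = lev v"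
proof -
  from assms have ne: "vs \<noteq> []" and l: "last vs = v" by (auto simp: paths_def)
  have "lev (vs ! (length vs - 1)) = Suc (length vs - 1)" using path_lev[OF assms] ne by simp
  with ne l show ?thesis by (simp add: last_conv_nth)
qed

definition F :: "nat \<Rightarrow> nat \<Rightarrow> nat \<Rightarrow> nat \<Rightarrow> nat \<Rightarrow> vtx list" where
  "F p k l t t0 = [S (p^k*t0 + (l+p^k*t) div p), V 1 ((l+p^k*t) div p), W 2 (l+p^k*t), V 2 l]"

lemma e1: assumes "t0 \<le> p - 2" "l1 < p^k" "p \<ge> 2"
  shows "edge_block p k (S (p^k*t0 + l1)) (V 1 l1) = Some (p^k*t0, p^k*(p-2-t0))"
proof -
  have "p^k*t0 + l1 < p^k*(t0+1)" using assms by simp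
  also have "\<dots> \<le> p^k*(p-1)" using assms by (intro mult_le_mono2) linarith
  finally have v: "p^k*t0 + l1 < p^k*(p-1)" .
  have "(p^k*t0 + l1 - l1) div p^k = t0" using assms by simp
  then show ?thesis using v assms by (auto simp: Let_def)
qed

lemma e2: assumes "L < p^(k+1)" "p \<ge> 1"
  shows "edge_block p k (V 1 (L div p)) (W 2 L) = Some (p^k*(p-1) - ((p-1)*(L div p) + L mod p), (p-1)*(L div p) + L mod p)"
proof -
  have "L div p < p^k" using assms by (simp add: div_less_iff_less_mult mult.commute)
  moreover have "L mod p \<le> p - 1" using assms by (metis Suc_pred' less_Suc_eq_le mod_less_divisor zero_less_iff_neq_zero not_one_le_zero)
  moreover have "L = p * (L div p) + L mod p" by simp
  moreover have "L - p * (L div p) = L mod p" by (simp add: minus_mult_div_eq_mod)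
  ultimately show ?thesis using assms by (auto simp: Let_def)
qed

lemma e3: assumes "l < p^k" "t < p"
  shows "edge_block p k (W 2 (l + p^k*t)) (V 2 l) = Some (p^k*t, p^k*(p-1-t))"
proof -
  have pk: "p^k > 0" using assms by auto
  have d: "(l + p^k*t) div p^k = t" using assms pk by simp
  have "l + p^k*t < p^k*(t+1)" using assms by simp
  also have "\<dots> \<le> p^k * p" using assms by (intro mult_le_mono2) linarith
  finally have "l + p^k*t < p^(k+1)" by (simp add: mult.commute)
  then show ?thesis using d assms by (simp add: Let_def)
qed

lemma paths_V2:
  assumes p2: "p \<ge> 2" and lk: "l < p^k"
  shows "paths p k (V 2 l) = (\<lambda>(t,t0). F p k l t t0) ` ({..<p} \<times> {..p-2})"
proof
  show "paths p k (V 2 l) \<subseteq> (\<lambda>(t,t0). F p k l t t0) ` ({..<p} \<times> {..p-2})"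
  proof
    fix vs assume vs: "vs \<in> paths p k (V 2 l)"
    have len: "length vs = 4" using path_len[OF vs] by simp
    have vseq: "vs = [vs!0, vs!1, vs!2, vs!3]"
    proof (rule nth_equalityI)
      fix i assume "i < length vs"
      then have "i = 0 \<or> i = 1 \<or> i = 2 \<or> i = 3" using len by auto
      then show "vs ! i = [vs!0, vs!1, vs!2, vs!3] ! i" by auto
    qed (simp add: len)
    have d: "vs!3 = V 2 l" using vs len by (auto simp: paths_def last_conv_nth)
    have a: "is_S (vs!0)" using vs len by (auto simp: paths_def hd_conv_nth)
    have all: "\<forall>j. j + 1 < 4 \<longrightarrow> edge_block p k (vs!j) (vs!(j+1)) \<noteq> None"
      using vs len by (simp add: paths_def)
    have e01: "edge_block p k (vs!0) (vs!1) \<noteq> None" using all[rule_format, of 0] by simp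
    have e12: "edge_block p k (vs!1) (vs!2) \<noteq> None" using all[rule_format, of 1] by (simp add: numeral_2_eq_2)
    have e23: "edge_block p k (vs!2) (vs!3) \<noteq> None" using all[rule_format, of 2] by simp
    obtain L where c: "vs!2 = W 2 L" and L: "L < p^(k+1)" and lL: "l = L - p^k*(L div p^k)"
      using e23 d by (cases "vs!2") (auto simp: Let_def split: if_splits)
    define t where "t = L div p^k"
    have tp: "t < p" using L p2 by (simp add: t_def div_less_iff_less_mult mult.commute)
    have Lt: "L = l + p^k*t" using lL by (simp add: t_def minus_mult_div_eq_mod)
    obtain l1 where b: "vs!1 = V 1 l1" and l1: "l1 = L div p"
    proof (cases "vs!1")
      case (V s l1)
      with e12 c obtain \<beta> where "s = 1" "\<beta> \<le> p - 1" "L = p*l1 + \<beta>"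
        by (auto simp: Let_def split: if_splits)
      moreover then have "l1 = L div p" using p2 by simp
      ultimately show ?thesis using that V by blast
    qed (use e12 c in auto)
    obtain i where ai: "vs!0 = S i" using a by (cases "vs!0") auto
    obtain t0 where t0: "t0 \<le> p - 2" "i = p^k*t0 + l1"
      using e01 ai b by (auto simp: Let_def split: if_splits)
    have "vs = F p k l t t0" using vseq ai b c d t0 l1 Lt by (simp add: F_def)
    then show "vs \<in> (\<lambda>(t,t0). F p k l t t0) ` ({..<p} \<times> {..p-2})" using tp t0 by force
  qed
next
  show "(\<lambda>(t,t0). F p k l t t0) ` ({..<p} \<times> {..p-2}) \<subseteq> paths p k (V 2 l)"
  proof (rule subsetI)
    fix x assume "x \<in> (\<lambda>(t,t0). F p k l t t0) ` ({..<p} \<times> {..p-2})"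
    then obtain t t0 where x: "x = F p k l t t0" and tp: "t < p" and t0: "t0 \<le> p-2" by auto
    define L where "L = l + p^k*t"
    have "l + p^k*t < p^k*(t+1)" using lk by simp
    also have "\<dots> \<le> p^k * p" using tp by (intro mult_le_mono2) linarith
    finally have L: "L < p^(k+1)" by (simp add: mult.commute L_def)
    have l1: "L div p < p^k" using L p2 by (simp add: div_less_iff_less_mult mult.commute)
    have E1: "edge_block p k (S (p^k*t0 + L div p)) (V 1 (L div p)) \<noteq> None"
      using e1[OF _ l1 p2] t0 by simp
    have E2: "edge_block p k (V 1 (L div p)) (W 2 L) \<noteq> None" using e2[OF L] p2 by simp
    have E3: "edge_block p k (W 2 L) (V 2 l) \<noteq> None" using e3[OF lk tp] by (simp add: L_def)
    have v: "p^k*t0 + L div p < p^k*(p-1)"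
    proof -
      have "p^k*t0 + L div p < p^k*(t0+1)" using l1 by simp
      also have "\<dots> \<le> p^k*(p-1)" using t0 p2 by (intro mult_le_mono2) auto
      finally show ?thesis .
    qed
    have "\<forall>j. j + 1 < 4 \<longrightarrow> edge_block p k (F p k l t t0 ! j) (F p k l t t0 ! (j+1)) \<noteq> None"
    proof (intro allI impI)
      fix j :: nat assume "j + 1 < 4"
      then have "j = 0 \<or> j = 1 \<or> j = 2" by auto
      then show "edge_block p k (F p k l t t0 ! j) (F p k l t t0 ! (j+1)) \<noteq> None"
        using E1 E2 E3 by (auto simp: F_def L_def)
    qed
    then show "x \<in> paths p k (V 2 l)" using v x
      by (simp add: paths_def F_def L_def)
  qed
qed

lemma card_two: "card ({j::nat. j = 1 \<and> A} \<union> {j. j = 3 \<and> B}) = (if A then 1 else 0) + (if B then 1 else 0)"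
  by (cases A; cases B) auto

lemma des_F:
  assumes p2: "p \<ge> 2" and lk: "l < p^k" and tp: "t < p" and t0: "t0 \<le> p - 2"
  defines "L \<equiv> l + p^k*t"
  defines "n3 \<equiv> (p-1)*(L div p) + L mod p"
  shows "des p k (F p k l t t0) = (if 2*t0 < p-1 then 1 else 0)
     + (if p^k*(p-1) - n3 > p^k*t \<and> n3 < p^k*(p-1-t) then 1 else 0)"
proof -
  have "l + p^k*t < p^k*(t+1)" using lk by simp
  also have "\<dots> \<le> p^k * p" using tp by (intro mult_le_mono2) linarith
  finally have L: "L < p^(k+1)" by (simp add: mult.commute L_def)
  have l1: "L div p < p^k" using L p2 by (simp add: div_less_iff_less_mult mult.commute)
  have E1: "edge_block p k (F p k l t t0 ! 0) (F p k l t t0 ! 1) = Some (p^k*t0, p^k*(p-2-t0))"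
    using e1[OF t0 l1 p2] by (simp add: F_def L_def)
  have E2: "edge_block p k (F p k l t t0 ! 1) (F p k l t t0 ! 2) = Some (p^k*(p-1) - n3, n3)"
    using e2[OF L] p2 by (simp add: F_def L_def n3_def)
  have E3: "edge_block p k (F p k l t t0 ! 2) (F p k l t t0 ! 3) = Some (p^k*t, p^k*(p-1-t))"
    using e3[OF lk tp] by (simp add: F_def)
  have len: "length (F p k l t t0) = 4" by (simp add: F_def)
  have "[0..<3] = [0::nat,1,2]" by (simp add: upt_rec)
  then have B: "blocks p k (F p k l t t0) = [(p^k*t0, p^k*(p-2-t0)), (p^k*(p-1) - n3, n3), (p^k*t, p^k*(p-1-t))]"
    unfolding blocks_def len using E1 E2 E3 by (simp add: numeral_2_eq_2 numeral_3_eq_3)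
  have pk: "p^k > 0" using p2 by simp
  have c1: "(\<exists>t'. p^k*t0 = p^k*t' \<and> 2*t' < p-1) = (2*t0 < p-1)" using pk by auto
  have "Des p k (F p k l t t0) = {j. j = 1 \<and> 2*t0 < p-1} \<union> {j. j = 3 \<and> p^k*(p-1) - n3 > p^k*t \<and> n3 < p^k*(p-1-t)}"
    unfolding Des_def Let_def B len using c1 by auto
  then show ?thesis by (simp add: des_def card_two)
qed

lemma arith1:
  fixes h q u r t :: nat
  assumes "h \<ge> 1" "u < q" "r \<le> 2*h" "t \<le> 2*h"
  shows "(2*h*u + r + (4*h+1)*q*t < 2*h*(2*h+1)*q) \<longleftrightarrow> (t < h \<or> (t = h \<and> 2*h*u + r < h*q))"
proof (cases "t < h")
  case True
  have a1: "2*h*(u+1) \<le> 2*h*q" using assms by (intro mult_le_mono2) simp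
  have a2: "(4*h+1)*q*(t+1) \<le> (4*h+1)*q*h" using True by (intro mult_le_mono2) simp
  have a3: "2*h*q + (4*h+1)*q*h < 2*h*(2*h+1)*q + (4*h+1)*q" using assms
    by (simp add: algebra_simps)
  have "2*h*u + r + (4*h+1)*q*t < 2*h*(2*h+1)*q" using a1 a2 a3 assms
    by (simp add: algebra_simps)
  then show ?thesis using True by simp
next
  case False
  show ?thesis
  proof (cases "t = h")
    case True
    have "(4*h+1)*q*t = 2*h*(2*h+1)*q - h*q + 0" using True by (simp add: algebra_simps)
    moreover have "h*q \<le> 2*h*(2*h+1)*q" by (simp add: algebra_simps)
    ultimately show ?thesis using True by (simp add: algebra_simps) 
  next
    case f2: False
    then have "h + 1 \<le> t" using False by simp
    then have "(4*h+1)*q*(h+1) \<le> (4*h+1)*q*t" by (intro mult_le_mono2)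
    moreover have "2*h*(2*h+1)*q \<le> (4*h+1)*q*(h+1)" by (simp add: algebra_simps)
    ultimately show ?thesis using False f2 by simp
  qed
qed

lemma arith2:
  fixes h c u r :: nat
  assumes "h \<ge> 1" "u < 2*c+1" "r \<le> 2*h"
  shows "(2*h*u + r < h*(2*c+1)) \<longleftrightarrow> 2*((2*h+1)*u + r) < (2*h+1)*(2*c+1) - 1"
proof -
  have L: "(2*h*u + r < h*(2*c+1)) \<longleftrightarrow> (u < c \<or> (u = c \<and> r < h))"
  proof (cases "u < c")
    case True
    then have "2*h*(u+1) \<le> 2*h*c" by (intro mult_le_mono2) simp
    then show ?thesis using True assms by (simp add: algebra_simps)
  next
    case False
    then have "u = c \<or> u \<ge> c + 1" by auto
    then show ?thesis
    proof
      assume "u \<ge> c+1"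
      then have "2*h*(c+1) \<le> 2*h*u" by (intro mult_le_mono2)
      then show ?thesis using False \<open>u \<ge> c+1\<close> by (simp add: algebra_simps)
    qed (simp add: algebra_simps)
  qed
  have R: "2*((2*h+1)*u + r) < (2*h+1)*(2*c+1) - 1 \<longleftrightarrow> (u < c \<or> (u = c \<and> r < h))"
  proof (cases "u < c")
    case True
    then have "(2*h+1)*(u+1) \<le> (2*h+1)*c" by (intro mult_le_mono2) simp
    then show ?thesis using True assms by (simp add: algebra_simps)
  next
    case False
    then have "u = c \<or> u \<ge> c + 1" by auto
    then show ?thesis
    proof
      assume "u \<ge> c+1"
      then have "(2*h+1)*(c+1) \<le> (2*h+1)*u" by (intro mult_le_mono2)
      then show ?thesis using False \<open>u \<ge> c+1\<close> by (simp add: algebra_simps)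
    qed (simp add: algebra_simps)
  qed
  show ?thesis using L R by simp
qed

lemma cond_lemma:
  fixes p k l t h :: nat
  assumes ph: "p = 2*h+1" and h1: "h \<ge> 1" and k1: "k \<ge> 1" and lk: "l < p^k" and tp: "t < p"
  defines "L \<equiv> l + p^k*t"
  defines "n3 \<equiv> (p-1)*(L div p) + L mod p"
  shows "(p^k*(p-1) - n3 > p^k*t \<and> n3 < p^k*(p-1-t)) \<longleftrightarrow> (t < h \<or> (t = h \<and> 2*l < p^k - 1))"
proof -
  define q where "q = p^(k-1)"
  have Pq: "p^k = p*q" using k1 unfolding q_def by (metis Suc_diff_1 le_less_trans less_numeral_extra(1) power_Suc zero_less_one le_eq_less_or_eq)
  have "odd q" unfolding q_def using ph by simp
  then obtain c where qc: "q = 2*c+1" by (metis oddE)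
  define u where "u = l div p"
  define r where "r = l mod p"
  have lur: "l = p*u + r" by (simp add: u_def r_def)
  have p0: "p > 0" using ph by simp
  have uq: "u < q" using lk Pq p0 unfolding u_def by (simp add: div_less_iff_less_mult mult.commute)
  have r2h: "r \<le> 2*h" using p0 ph unfolding r_def by (metis Suc_eq_plus1 less_Suc_eq_le mod_less_divisor)
  have rp: "r < p" using p0 unfolding r_def by simp
  have LL: "L = p*(u + q*t) + r" unfolding L_def using lur Pq by (simp add: algebra_simps)
  have Ld: "L div p = u + q*t" using LL rp p0 by simp
  have Lm: "L mod p = r" using LL rp p0 by simp
  have n3e: "n3 = 2*h*(u+q*t) + r" unfolding n3_def Ld Lm using ph by simp
  have tle: "p^k*t \<le> p^k*(p-1)" using tp by (intro mult_le_mono2) simp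
  have s: "p^k*(p-1-t) = p^k*(p-1) - p^k*t" by (simp add: diff_mult_distrib2)
  have c1: "(p^k*(p-1) - n3 > p^k*t \<and> n3 < p^k*(p-1-t)) \<longleftrightarrow> n3 + p^k*t < p^k*(p-1)"
    unfolding s using tle by linarith
  have e1: "n3 + p^k*t = 2*h*u + r + (4*h+1)*q*t" unfolding n3e Pq unfolding ph by (simp add: algebra_simps)
  have e2: "p^k*(p-1) = 2*h*(2*h+1)*q" unfolding Pq unfolding ph by (simp add: algebra_simps)
  have c2: "(2*h*u + r + (4*h+1)*q*t < 2*h*(2*h+1)*q) \<longleftrightarrow> (t < h \<or> (t = h \<and> 2*h*u + r < h*q))"
    using arith1[OF h1 uq r2h] tp ph by simp
  have c3: "(2*h*u + r < h*q) \<longleftrightarrow> 2*l < p^k - 1"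
    using arith2[OF h1, of u c r] uq r2h unfolding Pq unfolding qc lur unfolding ph by simp
  show ?thesis using c1 c2 c3 e1 e2 by simp
qed

lemma sum_ind: "finite A \<Longrightarrow> (\<Sum>x\<in>A. (if P x then 1 else 0::nat)) = card (A \<inter> {x. P x})"
  by (simp add: sum.If_cases)

theorem mainTheorem4:
  fixes p k l :: nat
  assumes "prime p" and "odd p" and "1 \<le> k" and "l < p^k"
  shows "Fib_M p k (V 2 l) =
           (if 2 * l < p^k - 1 then (p - 1) div 2 * (2 * p + 1)
            else (p - 1) div 2 * (2 * p - 1))"
proof -
  obtain h where ph: "p = 2*h+1" using assms(2) by (metis oddE)
  have p2: "p \<ge> 2" using assms(1) prime_ge_2_nat by blast
  then have h1: "h \<ge> 1" using ph by simp
  have pk: "p^k > 0" using p2 by simp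
  define A where "A = (2 * l < p^k - 1)"
  define g2 where "g2 t = (let L = l + p^k*t; n3 = (p-1)*(L div p) + L mod p in
      if p^k*(p-1) - n3 > p^k*t \<and> n3 < p^k*(p-1-t) then 1 else (0::nat))" for t
  have g2e: "g2 t = (if t < h \<or> (t = h \<and> A) then 1 else 0)" if "t < p" for t
    using cond_lemma[OF ph h1 assms(3) assms(4) that] unfolding g2_def A_def Let_def by simp
  have inj: "inj_on (\<lambda>(t,t0). F p k l t t0) ({..<p} \<times> {..p-2})"
  proof (rule inj_onI, clarify)
    fix t t0 t' t0' assume eq: "F p k l t t0 = F p k l t' t0'"
    have tt: "t = t'" using eq p2 by (simp add: F_def)
    have "t0 = t0'" using eq p2 tt by (simp add: F_def)
    then show "t = t' \<and> t0 = t0'" using tt by simp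
  qed
  have "Fib_M p k (V 2 l) = (\<Sum>(t,t0)\<in>{..<p} \<times> {..p-2}. des p k (F p k l t t0))"
    unfolding Fib_M_def paths_V2[OF p2 assms(4)] using sum.reindex[OF inj, of "des p k"] by (simp add: comp_def case_prod_beta)
  also have "\<dots> = (\<Sum>t<p. \<Sum>t0\<in>{..p-2}. (if 2*t0 < p-1 then 1 else 0) + g2 t)"
    unfolding sum.cartesian_product[symmetric]
    by (intro sum.cong refl) (simp add: des_F[OF p2 assms(4)] g2_def Let_def)
  also have "\<dots> = (\<Sum>t<p. h + (p-1) * g2 t)"
  proof (intro sum.cong refl)
    fix t
    have "(\<Sum>t0\<in>{..p-2}. (if 2*t0 < p-1 then 1 else 0::nat)) = card ({..p-2} \<inter> {t0. 2*t0 < p-1})"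
      by (simp add: sum_ind)
    also have "{..p-2} \<inter> {t0. 2*t0 < p-1} = {..<h}" using ph by auto
    finally have "(\<Sum>t0\<in>{..p-2}. (if 2*t0 < p-1 then 1 else 0::nat)) = h" by simp
    moreover have "card {..p-2} = p - 1" using p2 by simp
    ultimately show "(\<Sum>t0\<in>{..p-2}. (if 2*t0 < p-1 then 1 else 0) + g2 t) = h + (p-1) * g2 t"
      by (simp add: sum.distrib)
  qed
  also have "\<dots> = p*h + (p-1) * (\<Sum>t<p. g2 t)" by (simp add: sum.distrib sum_distrib_left)
  also have "(\<Sum>t<p. g2 t) = (\<Sum>t<p. (if t < h \<or> (t = h \<and> A) then 1 else 0))"
    by (intro sum.cong refl) (simp add: g2e)
  also have "\<dots> = card ({..<p} \<inter> {t. t < h \<or> (t = h \<and> A)})" by (simp add: sum_ind)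
  also have "{..<p} \<inter> {t. t < h \<or> (t = h \<and> A)} = {..<h + (if A then 1 else 0)}" using ph by auto
  finally have "Fib_M p k (V 2 l) = p*h + (p-1) * (h + (if A then 1 else 0))" by simp
  then show ?thesis unfolding A_def[symmetric] using ph by (cases A) (simp_all add: algebra_simps)
qed
end
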